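(* Let $N=[n(i,j)]$ be an $r\times r$ indecomposable generalised Cartan matrix. There exists an $r\times r$ matrix $A'$ such that (a) $A'_{ii}=1$ for $1\le i\le r$; (b) $A'_{ij}\in\{0,-1\}$ for $i\ne j$; (c) $A'_{ij}+A'_{ji}=n(j,i)$ for all $i,j$; (d) if $A'_{ij}=-1$, then the $i$-th row and the $j$-th column of $A'$ have no other entries equal to $-1$, if and only if $N$ is the generalised Cartan matrix of type $A_r$ ($r\ge1$) or of type $A^{(1)}_{r-1}$ ($r\ge 2$). For $A_1$ or $A^{(1)}_1$ there is exactly one matrix satisfying (a)–(d), and for $A_r$ ($r\ge2$) or $A^{(1)}_{r-1}$ ($r\ge3$) there are exactly two.
   Context: A generalised Cartan matrix is $N=[n(i,j)]_{1\le i,j\le r}$ with $n(i,j)\in\mathbb Z$, $n(i,i)=2$, $n(i,j)\le 0$ for $i\neq j$, and $n(i,j)=0\iff n(j,i)=0$; it is indecomposable if there is no partition of $\{1,\dots,r\}$ into two nonempty sets $I,J$ with $n(i,j)=0$ for all $i\in I,j\in J$. The generalised Cartan matrix of type $A_r$ ($r\ge1$) is the $r\times r$ matrix with $2$ on the diagonal, $-1$ in positions $(i,i\pm1)$ and $0$ elsewhere; that of type $A^{(1)}_1$ is $\begin{pmatrix}2&-2\\-2&2\end{pmatrix}$; that of type $A^{(1)}_{r-1}$ ($r\ge3$) is the $r\times r$ matrix with $2$ on the diagonal, $-1$ in positions $(i,i\pm1)$ and $(1,r),(r,1)$, and $0$ elsewhere. "$N$ is the generalised Cartan matrix of type X" means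 $N$ equals it up to a simultaneous permutation of rows and columns. *)

theory Defs
  imports Main
begin

text \<open>Square integer matrices of size r are functions nat => nat => int,
  indexed by 1..r (entries outside the index range are irrelevant except where
  stated).\<close>

definition gcm :: "nat \<Rightarrow> (nat \<Rightarrow> nat \<Rightarrow> int) \<Rightarrow> bool" where
  "gcm r N \<longleftrightarrow>
     (\<forall>i\<in>{1..r}. N i i = 2) \<and>
     (\<forall>i\<in>{1..r}. \<forall>j\<in>{1..r}. i \<noteq> j \<longrightarrow> N i j \<le> 0) \<and>
     (\<forall>i\<in>{1..r}. \<forall>j\<in>{1..r}. N i j = 0 \<longleftrightarrow> N j i = 0)"

definition indecomposable :: "nat \<Rightarrow> (nat \<Rightarrow> nat \<Rightarrow> int) \<Rightarrow> bool" where
  "indecomposable r N \<longleftrightarrow>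
     \<not> (\<exists>I J. I \<noteq> {} \<and> J \<noteq> {} \<and> I \<inter> J = {} \<and> I \<union> J = {1..r} \<and>
            (\<forall>i\<in>I. \<forall>j\<in>J. N i j = 0))"

definition cartan_A :: "nat \<Rightarrow> nat \<Rightarrow> nat \<Rightarrow> int" where
  "cartan_A r i j = (if i = j then 2 else if i = j + 1 \<or> j = i + 1 then -1 else 0)"

definition cartan_A_aff :: "nat \<Rightarrow> nat \<Rightarrow> nat \<Rightarrow> int" where
  "cartan_A_aff r i j =
     (if r = 2 then (if i = j then 2 else -2)
      else (if i = j then 2
            else if i = j + 1 \<or> j = i + 1 \<or> (i = 1 \<and> j = r) \<or> (i = r \<and> j = 1) then -1
            else 0))"

definition is_type :: "nat \<Rightarrow> (nat \<Rightarrow> nat \<Rightarrow> int) \<Rightarrow> (nat \<Rightarrow> nat \<Rightarrow> int) \<Rightarrow> bool" where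
  "is_type r M N \<longleftrightarrow>
     (\<exists>\<sigma>. bij_betw \<sigma> {1..r} {1..r} \<and>
          (\<forall>i\<in>{1..r}. \<forall>j\<in>{1..r}. N i j = M (\<sigma> i) (\<sigma> j)))"

definition admissible :: "nat \<Rightarrow> (nat \<Rightarrow> nat \<Rightarrow> int) \<Rightarrow> (nat \<Rightarrow> nat \<Rightarrow> int) \<Rightarrow> bool" where
  "admissible r N A \<longleftrightarrow>
     (\<forall>i\<in>{1..r}. A i i = 1) \<and>
     (\<forall>i\<in>{1..r}. \<forall>j\<in>{1..r}. i \<noteq> j \<longrightarrow> A i j \<in> {0, -1}) \<and>
     (\<forall>i\<in>{1..r}. \<forall>j\<in>{1..r}. A i j + A j i = N j i) \<and>
     (\<forall>i\<in>{1..r}. \<forall>j\<in>{1..r}. A i j = -1 \<longrightarrow>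
        (\<forall>k\<in>{1..r}. k \<noteq> j \<longrightarrow> A i k \<noteq> -1) \<and>
        (\<forall>k\<in>{1..r}. k \<noteq> i \<longrightarrow> A k j \<noteq> -1))"

text \<open>The set of r x r matrices satisfying (a)-(d); a matrix is represented
  canonically by requiring entries outside {1..r} x {1..r} to be 0.\<close>
definition admissible_set :: "nat \<Rightarrow> (nat \<Rightarrow> nat \<Rightarrow> int) \<Rightarrow> (nat \<Rightarrow> nat \<Rightarrow> int) set" where
  "admissible_set r N =
     {A. admissible r N A \<and> (\<forall>i j. i \<notin> {1..r} \<or> j \<notin> {1..r} \<longrightarrow> A i j = 0)}"

end

theory Submission
  imports Defs
begin

lemma adm_facts:
  assumes "admissible r N A"
  shows adm_diag: "\<And>i. i \<in> {1..r} \<Longrightarrow> A i i = 1"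
    and adm_off: "\<And>i j. i \<in> {1..r} \<Longrightarrow> j \<in> {1..r} \<Longrightarrow> i \<noteq> j \<Longrightarrow> A i j = 0 \<or> A i j = -1"
    and adm_sum: "\<And>i j. i \<in> {1..r} \<Longrightarrow> j \<in> {1..r} \<Longrightarrow> A i j + A j i = N j i"
    and adm_row: "\<And>i j k. i \<in> {1..r} \<Longrightarrow> j \<in> {1..r} \<Longrightarrow> k \<in> {1..r} \<Longrightarrow> A i j = -1 \<Longrightarrow> k \<noteq> j \<Longrightarrow> A i k \<noteq> -1"
    and adm_col: "\<And>i j k. i \<in> {1..r} \<Longrightarrow> j \<in> {1..r} \<Longrightarrow> k \<in> {1..r} \<Longrightarrow> A i j = -1 \<Longrightarrow> k \<noteq> i \<Longrightarrow> A k j \<noteq> -1"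
  using assms unfolding admissible_def by blast+

definition permute :: "nat \<Rightarrow> (nat \<Rightarrow> nat) \<Rightarrow> (nat \<Rightarrow> nat \<Rightarrow> int) \<Rightarrow> (nat \<Rightarrow> nat \<Rightarrow> int)" where
  "permute r \<sigma> A = (\<lambda>i j. if i \<in> {1..r} \<and> j \<in> {1..r} then A (\<sigma> i) (\<sigma> j) else 0)"

lemma adm_transfer:
  assumes b: "bij_betw \<sigma> {1..r} {1..r}" and NM: "\<forall>i\<in>{1..r}. \<forall>j\<in>{1..r}. N i j = M (\<sigma> i) (\<sigma> j)"
    and a: "admissible r M A"
  shows "admissible r N (permute r \<sigma> A)"
proof -
  have inr: "\<And>i. i \<in> {1..r} \<Longrightarrow> \<sigma> i \<in> {1..r}" using b bij_betwE by blast
  have inj: "\<And>i j. i \<in> {1..r} \<Longrightarrow> j \<in> {1..r} \<Longrightarrow> i \<noteq> j \<Longrightarrow> \<sigma> i \<noteq> \<sigma> j"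
    using b unfolding bij_betw_def by (auto dest: inj_onD)
  have pe: "\<And>i j. i \<in> {1..r} \<Longrightarrow> j \<in> {1..r} \<Longrightarrow> permute r \<sigma> A i j = A (\<sigma> i) (\<sigma> j)"
    by (simp add: permute_def)
  show ?thesis unfolding admissible_def
  proof (intro conjI ballI impI)
    fix i assume i: "i \<in> {1..r}"
    show "permute r \<sigma> A i i = 1" using adm_diag[OF a inr[OF i]] pe[OF i i] by simp
  next
    fix i j assume i: "i \<in> {1..r}" and j: "j \<in> {1..r}" and ij: "i \<noteq> j"
    show "permute r \<sigma> A i j \<in> {0, -1}" using adm_off[OF a inr[OF i] inr[OF j] inj[OF i j ij]] pe[OF i j] by simp
  next
    fix i j assume i: "i \<in> {1..r}" and j: "j \<in> {1..r}"
    show "permute r \<sigma> A i j + permute r \<sigma> A j i = N j i"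
      using adm_sum[OF a inr[OF i] inr[OF j]] pe[OF i j] pe[OF j i] NM j i by simp
  next
    fix i j k assume i: "i \<in> {1..r}" and j: "j \<in> {1..r}" and e: "permute r \<sigma> A i j = -1"
      and k: "k \<in> {1..r}" and kj: "k \<noteq> j"
    show "permute r \<sigma> A i k \<noteq> -1"
      using adm_row[OF a inr[OF i] inr[OF j] inr[OF k]] e pe[OF i j] pe[OF i k] inj[OF k j kj] by simp
  next
    fix i j k assume i: "i \<in> {1..r}" and j: "j \<in> {1..r}" and e: "permute r \<sigma> A i j = -1"
      and k: "k \<in> {1..r}" and ki: "k \<noteq> i"
    show "permute r \<sigma> A k j \<noteq> -1"
      using adm_col[OF a inr[OF i] inr[OF j] inr[OF k]] e pe[OF i j] pe[OF k j] inj[OF k i ki] by simp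
  qed
qed

lemma type_sym:
  assumes b: "bij_betw \<sigma> {1..r} {1..r}" and NM: "\<forall>i\<in>{1..r}. \<forall>j\<in>{1..r}. N i j = M (\<sigma> i) (\<sigma> j)"
  shows "bij_betw (inv_into {1..r} \<sigma>) {1..r} {1..r} \<and>
    (\<forall>i\<in>{1..r}. \<forall>j\<in>{1..r}. M i j = N (inv_into {1..r} \<sigma> i) (inv_into {1..r} \<sigma> j))"
proof
  show bb: "bij_betw (inv_into {1..r} \<sigma>) {1..r} {1..r}" using b bij_betw_inv_into by blast
  show "\<forall>i\<in>{1..r}. \<forall>j\<in>{1..r}. M i j = N (inv_into {1..r} \<sigma> i) (inv_into {1..r} \<sigma> j)"
  proof (intro ballI)
    fix i j assume i: "i \<in> {1..r}" and j: "j \<in> {1..r}"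
    have "inv_into {1..r} \<sigma> i \<in> {1..r}" "inv_into {1..r} \<sigma> j \<in> {1..r}" using bb i j bij_betwE by blast+
    moreover have "\<sigma> (inv_into {1..r} \<sigma> i) = i" "\<sigma> (inv_into {1..r} \<sigma> j) = j"
      using b i j bij_betw_inv_into_right by fastforce+
    ultimately show "M i j = N (inv_into {1..r} \<sigma> i) (inv_into {1..r} \<sigma> j)" using NM by metis
  qed
qed

lemma card_transfer:
  assumes "is_type r M N" shows "card (admissible_set r N) = card (admissible_set r M)"
proof -
  obtain \<sigma> where b: "bij_betw \<sigma> {1..r} {1..r}" and NM: "\<forall>i\<in>{1..r}. \<forall>j\<in>{1..r}. N i j = M (\<sigma> i) (\<sigma> j)"
    using assms is_type_def by blast
  define \<tau> where "\<tau> = inv_into {1..r} \<sigma>"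
  have b2: "bij_betw \<tau> {1..r} {1..r}" and MN: "\<forall>i\<in>{1..r}. \<forall>j\<in>{1..r}. M i j = N (\<tau> i) (\<tau> j)"
    using type_sym[OF b NM] \<tau>_def by auto
  have st: "\<And>i. i \<in> {1..r} \<Longrightarrow> \<sigma> (\<tau> i) = i" using b bij_betw_inv_into_right \<tau>_def by fastforce
  have ts: "\<And>i. i \<in> {1..r} \<Longrightarrow> \<tau> (\<sigma> i) = i" using b bij_betw_inv_into_left \<tau>_def by fastforce
  have inr: "\<And>i. i \<in> {1..r} \<Longrightarrow> \<sigma> i \<in> {1..r}" using b bij_betwE by blast
  have inr2: "\<And>i. i \<in> {1..r} \<Longrightarrow> \<tau> i \<in> {1..r}" using b2 bij_betwE by blast
  have "bij_betw (permute r \<sigma>) (admissible_set r M) (admissible_set r N)"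
  proof (rule bij_betw_byWitness[where f' = "permute r \<tau>"])
    show "\<forall>a\<in>admissible_set r M. permute r \<tau> (permute r \<sigma> a) = a"
      unfolding admissible_set_def permute_def using inr2 st by (auto intro!: ext)
    show "\<forall>a\<in>admissible_set r N. permute r \<sigma> (permute r \<tau> a) = a"
      unfolding admissible_set_def permute_def using inr ts by (auto intro!: ext)
    show "permute r \<sigma> ` admissible_set r M \<subseteq> admissible_set r N"
      using adm_transfer[OF b NM] unfolding admissible_set_def by (auto simp: permute_def)
    show "permute r \<tau> ` admissible_set r N \<subseteq> admissible_set r M"
      using adm_transfer[OF b2 MN] unfolding admissible_set_def by (auto simp: permute_def)
  qed
  then show ?thesis by (simp add: bij_betw_same_card)
qed


definition B1 :: "nat \<Rightarrow> nat \<Rightarrow> nat \<Rightarrow> int" where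
  "B1 r i j = (if i \<in> {1..r} \<and> j \<in> {1..r} then (if i = j then 1 else if j = Suc i then -1 else 0) else 0)"
definition B2 :: "nat \<Rightarrow> nat \<Rightarrow> nat \<Rightarrow> int" where
  "B2 r i j = (if i \<in> {1..r} \<and> j \<in> {1..r} then (if i = j then 1 else if i = Suc j then -1 else 0) else 0)"
definition C1 :: "nat \<Rightarrow> nat \<Rightarrow> nat \<Rightarrow> int" where
  "C1 r i j = (if i \<in> {1..r} \<and> j \<in> {1..r} then (if i = j then 1 else if j = Suc i \<or> (i = r \<and> j = 1) then -1 else 0) else 0)"
definition C2 :: "nat \<Rightarrow> nat \<Rightarrow> nat \<Rightarrow> int" where
  "C2 r i j = (if i \<in> {1..r} \<and> j \<in> {1..r} then (if i = j then 1 else if i = Suc j \<or> (j = r \<and> i = 1) then -1 else 0) else 0)"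
definition D2 :: "nat \<Rightarrow> nat \<Rightarrow> int" where
  "D2 i j = (if i \<in> {1..2} \<and> j \<in> {1..2} then (if i = j then 1 else -1) else 0)"

lemma B1_adm: "B1 r \<in> admissible_set r (cartan_A r)"
  unfolding admissible_set_def admissible_def B1_def cartan_A_def by auto
lemma B2_adm: "B2 r \<in> admissible_set r (cartan_A r)"
  unfolding admissible_set_def admissible_def B2_def cartan_A_def by auto
lemma C1_adm: "r \<ge> 3 \<Longrightarrow> C1 r \<in> admissible_set r (cartan_A_aff r)"
  unfolding admissible_set_def admissible_def C1_def cartan_A_aff_def by auto
lemma C2_adm: "r \<ge> 3 \<Longrightarrow> C2 r \<in> admissible_set r (cartan_A_aff r)"
  unfolding admissible_set_def admissible_def C2_def cartan_A_aff_def by auto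
lemma D2_adm: "D2 \<in> admissible_set 2 (cartan_A_aff 2)"
  unfolding admissible_set_def admissible_def D2_def cartan_A_aff_def by auto


definition walk :: "(nat \<Rightarrow> nat \<Rightarrow> bool) \<Rightarrow> nat \<Rightarrow> nat \<Rightarrow> (nat \<Rightarrow> nat) \<Rightarrow> bool" where
  "walk R r n p \<longleftrightarrow> n \<ge> 1 \<and> (\<forall>k<n. p k \<in> {1..r}) \<and> inj_on p {..<n} \<and> (\<forall>k. Suc k < n \<longrightarrow> R (p k) (p (Suc k)))"

lemma walk_le: "walk R r n p \<Longrightarrow> n \<le> r"
proof -
  assume w: "walk R r n p"
  have "card {..<n} \<le> card {1..r}"
    by (rule card_inj_on_le) (use w walk_def in auto)
  then show ?thesis by simp
qed

lemma walk_max: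
  assumes Rr: "\<And>i j. R i j \<Longrightarrow> j \<in> {1..r}"
  shows "walk R r n p \<Longrightarrow> \<exists>n' p'. walk R r n' p' \<and> p' 0 = p 0 \<and> (\<forall>j. R (p' (n'-1)) j \<longrightarrow> j \<in> p' ` {..<n'})"
proof (induction "r - n" arbitrary: n p rule: less_induct)
  case less
  show ?case
  proof (cases "\<forall>j. R (p (n-1)) j \<longrightarrow> j \<in> p ` {..<n}")
    case True then show ?thesis using less.prems by blast
  next
    case False
    then obtain j where j: "R (p (n-1)) j" "j \<notin> p ` {..<n}" by blast
    define q where "q = p(n := j)"
    have w: "walk R r n p" by fact
    have n1: "n \<ge> 1" using w walk_def by blast
    have qe: "\<And>k. k < n \<Longrightarrow> q k = p k" using q_def by simp
    have "walk R r (Suc n) q"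
      unfolding walk_def
    proof (intro conjI allI impI)
      show "1 \<le> Suc n" by simp
    next
      fix k assume "k < Suc n"
      then show "q k \<in> {1..r}"
        using w Rr j(1) unfolding walk_def q_def by (cases "k = n") auto
    next
      have "inj_on q {..<n}" using w unfolding walk_def by (metis inj_on_cong lessThan_iff qe)
      moreover have "q n \<notin> q ` {..<n}" using j(2) qe q_def by auto
      ultimately have "inj_on q (insert n {..<n})" by simp
      then show "inj_on q {..<Suc n}" by (simp add: lessThan_Suc)
    next
      fix k assume k: "Suc k < Suc n"
      show "R (q k) (q (Suc k))"
      proof (cases "Suc k = n")
        case True then show ?thesis using j(1) q_def by (auto simp: qe)
      next
        case False then show ?thesis using k w unfolding walk_def q_def by auto
      qed
    qed
    moreover have "r - Suc n < r - n" using walk_le[OF calculation] by simp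
    ultimately obtain n' p' where "walk R r n' p'" "p' 0 = q 0" "\<forall>j. R (p' (n'-1)) j \<longrightarrow> j \<in> p' ` {..<n'}"
      using less.hyps by blast
    moreover have "q 0 = p 0" using n1 qe by simp
    ultimately show ?thesis by metis
  qed
qed

lemma struct_lemma:
  assumes Rr: "\<And>i j. R i j \<Longrightarrow> i \<in> {1..r} \<and> j \<in> {1..r}"
    and Rf: "\<And>i j k. R i j \<Longrightarrow> R i k \<Longrightarrow> j = k"
    and Ri: "\<And>i j k. R i k \<Longrightarrow> R j k \<Longrightarrow> i = j"
    and Rirr: "\<And>i. \<not> R i i"
    and conn: "\<And>P. P \<subseteq> {1..r} \<Longrightarrow> P \<noteq> {} \<Longrightarrow> (\<forall>i\<in>P. \<forall>j. R i j \<or> R j i \<longrightarrow> j \<in> P) \<Longrightarrow> P = {1..r}"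
    and s: "s \<in> {1..r}"
    and cs: "(\<forall>j. \<not> R j s) \<or> (\<forall>i\<in>{1..r}. \<exists>j. R i j)"
  shows "\<exists>p. bij_betw p {..<r} {1..r} \<and>
     (\<forall>a<r. \<forall>b<r. R (p a) (p b) \<longleftrightarrow> (b = Suc a \<or> ((\<exists>j. R j s) \<and> a = r - 1 \<and> b = 0))) \<and>
     ((\<exists>j. R j s) \<longrightarrow> r \<ge> 2)"
proof -
  have "walk R r 1 (\<lambda>_. s)" using s unfolding walk_def by (auto simp: lessThan_Suc)
  then obtain n p where w: "walk R r n p" and p0: "p 0 = s" and mx: "\<forall>j. R (p (n-1)) j \<longrightarrow> j \<in> p ` {..<n}"
    using walk_max[of R r] Rr by blast
  have n1: "n \<ge> 1" and pr: "\<And>k. k < n \<Longrightarrow> p k \<in> {1..r}" and inj: "inj_on p {..<n}"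
    and edge: "\<And>k. Suc k < n \<Longrightarrow> R (p k) (p (Suc k))" using w walk_def by auto
  have injD: "\<And>a b. a < n \<Longrightarrow> b < n \<Longrightarrow> p a = p b \<Longrightarrow> a = b" using inj by (auto dest: inj_onD)
  have inedge: "\<And>k j. 1 \<le> k \<Longrightarrow> k < n \<Longrightarrow> R j (p k) \<Longrightarrow> j = p (k - 1)"
  proof -
    fix k j assume "1 \<le> k" "k < n" "R j (p k)"
    moreover have "R (p (k-1)) (p k)" using edge[of "k-1"] \<open>1 \<le> k\<close> \<open>k < n\<close> by simp
    ultimately show "j = p (k - 1)" using Ri by blast
  qed
  have bk: "\<And>q. R (p (n-1)) q \<Longrightarrow> q = s"
  proof -
    fix q assume q: "R (p (n-1)) q"
    then obtain m where m: "m < n" "q = p m" using mx by blast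
    show "q = s"
    proof (cases "m = 0")
      case True then show ?thesis using m p0 by simp
    next
      case False
      then have "p (n-1) = p (m-1)" using inedge[of m] m q by simp
      then have "n - 1 = m - 1" using injD m n1 by simp
      then show ?thesis using m False n1 by simp
    qed
  qed
  define cyc where "cyc = (\<exists>j. R j s)"
  have cycE: "cyc \<Longrightarrow> R (p (n-1)) s"
  proof -
    assume cyc
    then have "\<forall>i\<in>{1..r}. \<exists>j. R i j" using cs cyc_def by blast
    then obtain q where "R (p (n-1)) q" using pr[of "n-1"] n1 by force
    then show ?thesis using bk by metis
  qed
  have ncyc: "\<not> cyc \<Longrightarrow> \<not> R (p (n-1)) q" for q using bk cyc_def by blast
  define P where "P = p ` {..<n}"
  have "P = {1..r}"
  proof (rule conn)
    show "P \<subseteq> {1..r}" using pr P_def by auto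
    show "P \<noteq> {}" using n1 P_def by (auto simp: lessThan_empty_iff)
    show "\<forall>i\<in>P. \<forall>j. R i j \<or> R j i \<longrightarrow> j \<in> P"
    proof (intro ballI allI impI)
      fix i j assume iP: "i \<in> P" and e: "R i j \<or> R j i"
      then obtain k where k: "k < n" "i = p k" using P_def by auto
      show "j \<in> P"
        using e
      proof
        assume e1: "R i j"
        show "j \<in> P"
        proof (cases "Suc k < n")
          case True then have "j = p (Suc k)" using e1 edge k Rf by blast
          then show ?thesis using True P_def by auto
        next
          case False then have "k = n - 1" using k by simp
          then show ?thesis using mx e1 k P_def by auto
        qed
      next
        assume e2: "R j i"
        show "j \<in> P"
        proof (cases "k = 0")
          case False then have "j = p (k - 1)" using inedge k e2 by simp
          then show ?thesis using k P_def by auto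
        next
          case True then have "R j s" using e2 k p0 by simp
          then have "cyc" using cyc_def by blast
          then have "j = p (n - 1)" using cycE \<open>R j s\<close> Ri by blast
          then show ?thesis using n1 P_def by auto
        qed
      qed
    qed
  qed
  moreover have "card P = n" using P_def inj by (simp add: card_image)
  ultimately have nr: "n = r" by simp
  have bij: "bij_betw p {..<r} {1..r}" using inj nr \<open>P = {1..r}\<close> P_def bij_betw_def by blast
  have ch: "\<forall>a<r. \<forall>b<r. R (p a) (p b) \<longleftrightarrow> (b = Suc a \<or> (cyc \<and> a = r - 1 \<and> b = 0))"
  proof (intro allI impI)
    fix a b assume a: "a < r" and b: "b < r"
    show "R (p a) (p b) \<longleftrightarrow> (b = Suc a \<or> (cyc \<and> a = r - 1 \<and> b = 0))"
    proof (cases "b = 0")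
      case False
      have "R (p a) (p b) \<longleftrightarrow> b = Suc a"
      proof
        assume "R (p a) (p b)"
        then have "p a = p (b - 1)" using inedge[of b] False b nr by simp
        then have "a = b - 1" using injD a b nr by simp
        then show "b = Suc a" using False by simp
      next
        assume "b = Suc a" then show "R (p a) (p b)" using edge b nr by simp
      qed
      then show ?thesis using False by simp
    next
      case True
      show ?thesis
      proof (cases cyc)
        case False then show ?thesis using True cyc_def p0 by auto
      next
        case c: True
        have "R (p a) s \<longleftrightarrow> a = r - 1"
        proof
          assume "R (p a) s"
          then have "p a = p (n - 1)" using cycE c Ri by blast
          then show "a = r - 1" using injD a nr n1 by simp
        next
          assume "a = r - 1" then show "R (p a) s" using cycE c nr by simp
        qed
        then show ?thesis using True c p0 by auto
      qed
    qed
  qed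
  have "cyc \<longrightarrow> r \<ge> 2"
  proof
    assume c: cyc
    show "r \<ge> 2"
    proof (rule ccontr)
      assume "\<not> r \<ge> 2" then have "n = 1" using nr n1 by simp
      then show False using cycE c p0 Rirr by simp
    qed
  qed
  then show ?thesis using bij ch cyc_def by blast
qed


lemma chain_fw:
  assumes a: "admissible r N A" and adj: "\<And>i. 1 \<le> i \<Longrightarrow> Suc i \<le> r \<Longrightarrow> N (Suc i) i = -1"
    and s: "A 1 2 = -1" and r: "r \<ge> 2"
  shows "1 \<le> i \<Longrightarrow> Suc i \<le> r \<Longrightarrow> A i (Suc i) = -1"
proof (induction i)
  case 0 then show ?case by simp
next
  case (Suc m)
  show ?case
  proof (cases "m = 0")
    case True then show ?thesis using s by (simp add: numeral_2_eq_2)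
  next
    case False
    then have IH: "A m (Suc m) = -1" using Suc by simp
    have rng: "m \<in> {1..r}" "Suc m \<in> {1..r}" "Suc (Suc m) \<in> {1..r}" using Suc False by auto
    have sum: "A (Suc m) (Suc (Suc m)) + A (Suc (Suc m)) (Suc m) = -1"
      using adm_sum[OF a rng(2) rng(3)] adj[of "Suc m"] Suc by simp
    have "A (Suc (Suc m)) (Suc m) \<noteq> -1" using adm_col[OF a rng(1) rng(2) rng(3) IH] by simp
    then have "A (Suc (Suc m)) (Suc m) = 0" using adm_off[OF a rng(3) rng(2)] by simp
    then show ?thesis using sum by simp
  qed
qed

lemma chain_bw:
  assumes a: "admissible r N A" and adj: "\<And>i. 1 \<le> i \<Longrightarrow> Suc i \<le> r \<Longrightarrow> N i (Suc i) = -1"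
    and s: "A 2 1 = -1" and r: "r \<ge> 2"
  shows "1 \<le> i \<Longrightarrow> Suc i \<le> r \<Longrightarrow> A (Suc i) i = -1"
proof (induction i)
  case 0 then show ?case by simp
next
  case (Suc m)
  show ?case
  proof (cases "m = 0")
    case True then show ?thesis using s by (simp add: numeral_2_eq_2)
  next
    case False
    then have IH: "A (Suc m) m = -1" using Suc by simp
    have rng: "m \<in> {1..r}" "Suc m \<in> {1..r}" "Suc (Suc m) \<in> {1..r}" using Suc False by auto
    have sum: "A (Suc (Suc m)) (Suc m) + A (Suc m) (Suc (Suc m)) = -1"
      using adm_sum[OF a rng(3) rng(2)] adj[of "Suc m"] Suc by simp
    have "A (Suc m) (Suc (Suc m)) \<noteq> -1" using adm_row[OF a rng(2) rng(1) rng(3) IH] by simp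
    then have "A (Suc m) (Suc (Suc m)) = 0" using adm_off[OF a rng(2) rng(3)] by simp
    then show ?thesis using sum by simp
  qed
qed

lemma pair_zero:
  assumes a: "admissible r N A" "i \<in> {1..r}" "j \<in> {1..r}" "i \<noteq> j" "N j i = 0"
  shows "A i j = 0"
  using adm_sum[OF a(1-3)] adm_off[OF a(1-4)] adm_off[OF a(1) a(3) a(2)] a(4,5) by auto

lemma pair_m1:
  assumes a: "admissible r N A" "i \<in> {1..r}" "j \<in> {1..r}" "i \<noteq> j" "N j i = -1" "A j i = -1"
  shows "A i j = 0"
  using adm_sum[OF a(1-3)] a(5,6) by auto

lemma A_unique:
  assumes A: "A \<in> admissible_set r (cartan_A r)" and r: "r \<ge> 1"
  shows "A = B1 r \<or> A = B2 r"
proof -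
  have a: "admissible r (cartan_A r) A" and z: "\<And>i j. i \<notin> {1..r} \<or> j \<notin> {1..r} \<Longrightarrow> A i j = 0"
    using A admissible_set_def by auto
  show ?thesis
  proof (cases "r = 1")
    case True
    have "A = B1 r" using z adm_diag[OF a] True by (auto simp: B1_def intro!: ext)
    then show ?thesis by simp
  next
    case False
    then have r2: "r \<ge> 2" using r by simp
    have adj1: "\<And>i. 1 \<le> i \<Longrightarrow> Suc i \<le> r \<Longrightarrow> cartan_A r (Suc i) i = -1"
      and adj2: "\<And>i. 1 \<le> i \<Longrightarrow> Suc i \<le> r \<Longrightarrow> cartan_A r i (Suc i) = -1" by (simp_all add: cartan_A_def)
    have rr: "1 \<in> {1..r}" "2 \<in> {1..r}" using r2 by auto
    have "A 1 2 + A 2 1 = -1" using adm_sum[OF a rr] by (simp add: cartan_A_def)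
    then have "A 1 2 = -1 \<or> A 2 1 = -1" using adm_off[OF a rr] by auto
    then show ?thesis
    proof
      assume s: "A 1 2 = -1"
      have f: "\<And>i. 1 \<le> i \<Longrightarrow> Suc i \<le> r \<Longrightarrow> A i (Suc i) = -1" using chain_fw[OF a adj1 s r2] by blast
      have "A = B1 r"
      proof (intro ext)
        fix i j
        show "A i j = B1 r i j"
        proof (cases "i \<in> {1..r} \<and> j \<in> {1..r}")
          case False then show ?thesis using z by (auto simp: B1_def)
        next
          case True
          consider "i = j" | "j = Suc i" | "i = Suc j" | "i \<noteq> j" "j \<noteq> Suc i" "i \<noteq> Suc j" by blast
          then show ?thesis
          proof cases
            case 1 then show ?thesis using True adm_diag[OF a] by (simp add: B1_def)
          next
            case 2 then show ?thesis using True f[of i] by (simp add: B1_def)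
          next
            case 3 then have "A i j = 0" using True f[of j] pair_m1[OF a, of i j] by (simp add: cartan_A_def)
            then show ?thesis using 3 True by (simp add: B1_def)
          next
            case 4 then have "A i j = 0" using True pair_zero[OF a, of i j] by (simp add: cartan_A_def)
            then show ?thesis using 4 True by (simp add: B1_def)
          qed
        qed
      qed
      then show ?thesis by simp
    next
      assume s: "A 2 1 = -1"
      have f: "\<And>i. 1 \<le> i \<Longrightarrow> Suc i \<le> r \<Longrightarrow> A (Suc i) i = -1" using chain_bw[OF a adj2 s r2] by blast
      have "A = B2 r"
      proof (intro ext)
        fix i j
        show "A i j = B2 r i j"
        proof (cases "i \<in> {1..r} \<and> j \<in> {1..r}")
          case False then show ?thesis using z by (auto simp: B2_def)
        next
          case True
          consider "i = j" | "j = Suc i" | "i = Suc j" | "i \<noteq> j" "j \<noteq> Suc i" "i \<noteq> Suc j" by blast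
          then show ?thesis
          proof cases
            case 1 then show ?thesis using True adm_diag[OF a] by (simp add: B2_def)
          next
            case 3 then show ?thesis using True f[of j] by (simp add: B2_def)
          next
            case 2 then have "A i j = 0" using True f[of i] pair_m1[OF a, of i j] by (simp add: cartan_A_def)
            then show ?thesis using 2 True by (simp add: B2_def)
          next
            case 4 then have "A i j = 0" using True pair_zero[OF a, of i j] by (simp add: cartan_A_def)
            then show ?thesis using 4 True by (simp add: B2_def)
          qed
        qed
      qed
      then show ?thesis by simp
    qed
  qed
qed


lemma aff_unique:
  assumes A: "A \<in> admissible_set r (cartan_A_aff r)" and r: "r \<ge> 3"
  shows "A = C1 r \<or> A = C2 r"
proof -
  have a: "admissible r (cartan_A_aff r) A" and z: "\<And>i j. i \<notin> {1..r} \<or> j \<notin> {1..r} \<Longrightarrow> A i j = 0"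
    using A admissible_set_def by auto
  have r2: "r \<ge> 2" using r by simp
  have adj1: "\<And>i. 1 \<le> i \<Longrightarrow> Suc i \<le> r \<Longrightarrow> cartan_A_aff r (Suc i) i = -1"
    and adj2: "\<And>i. 1 \<le> i \<Longrightarrow> Suc i \<le> r \<Longrightarrow> cartan_A_aff r i (Suc i) = -1" using r by (simp_all add: cartan_A_aff_def)
  have rr: "1 \<in> {1..r}" "2 \<in> {1..r}" "r \<in> {1..r}" "r - 1 \<in> {1..r}" using r by auto
  have "A 1 2 + A 2 1 = -1" using adm_sum[OF a rr(1,2)] r by (simp add: cartan_A_aff_def)
  then have "A 1 2 = -1 \<or> A 2 1 = -1" using adm_off[OF a rr(1,2)] by auto
  then show ?thesis
  proof
    assume s: "A 1 2 = -1"
    have f: "\<And>i. 1 \<le> i \<Longrightarrow> Suc i \<le> r \<Longrightarrow> A i (Suc i) = -1" using chain_fw[OF a adj1 s r2] by blast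
    have w0: "A r 1 + A 1 r = -1" using adm_sum[OF a rr(3,1)] r by (simp add: cartan_A_aff_def)
    have "A 1 r \<noteq> -1" using adm_row[OF a rr(1,2,3) s] r by simp
    then have w: "A r 1 = -1" and w': "A 1 r = 0" using w0 adm_off[OF a rr(1,3)] r by auto
    have "A = C1 r"
    proof (intro ext)
      fix i j
      show "A i j = C1 r i j"
      proof (cases "i \<in> {1..r} \<and> j \<in> {1..r}")
        case False then show ?thesis using z by (auto simp: C1_def)
      next
        case True
        consider "i = j" | "j = Suc i" | "i = Suc j" | "i = r \<and> j = 1" | "i = 1 \<and> j = r"
          | "i \<noteq> j" "j \<noteq> Suc i" "i \<noteq> Suc j" "\<not> (i = r \<and> j = 1)" "\<not> (i = 1 \<and> j = r)" by blast
        then show ?thesis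
        proof cases
          case 1 then show ?thesis using True adm_diag[OF a] by (simp add: C1_def)
        next
          case 2 then show ?thesis using True f[of i] by (simp add: C1_def)
        next
          case 3 then have "A i j = 0" using True f[of j] pair_m1[OF a, of i j] r by (simp add: cartan_A_aff_def)
          then show ?thesis using 3 True r by (auto simp add: C1_def)
        next
          case 4 then show ?thesis using w r by (simp add: C1_def)
        next
          case 5 then show ?thesis using w' r by (simp add: C1_def)
        next
          case 6 then have "A i j = 0" using True pair_zero[OF a, of i j] r by (auto simp add: cartan_A_aff_def)
          then show ?thesis using 6 True by (simp add: C1_def)
        qed
      qed
    qed
    then show ?thesis by simp
  next
    assume s: "A 2 1 = -1"
    have f: "\<And>i. 1 \<le> i \<Longrightarrow> Suc i \<le> r \<Longrightarrow> A (Suc i) i = -1" using chain_bw[OF a adj2 s r2] by blast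
    have w0: "A 1 r + A r 1 = -1" using adm_sum[OF a rr(1,3)] r by (simp add: cartan_A_aff_def)
    have e: "A r (r - 1) = -1" using f[of "r - 1"] r by simp
    have "A r 1 \<noteq> -1" using adm_row[OF a rr(3,4,1) e] r by simp
    then have w: "A 1 r = -1" and w': "A r 1 = 0" using w0 adm_off[OF a rr(3,1)] r by auto
    have "A = C2 r"
    proof (intro ext)
      fix i j
      show "A i j = C2 r i j"
      proof (cases "i \<in> {1..r} \<and> j \<in> {1..r}")
        case False then show ?thesis using z by (auto simp: C2_def)
      next
        case True
        consider "i = j" | "j = Suc i" | "i = Suc j" | "i = r \<and> j = 1" | "i = 1 \<and> j = r"
          | "i \<noteq> j" "j \<noteq> Suc i" "i \<noteq> Suc j" "\<not> (i = r \<and> j = 1)" "\<not> (i = 1 \<and> j = r)" by blast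
        then show ?thesis
        proof cases
          case 1 then show ?thesis using True adm_diag[OF a] by (simp add: C2_def)
        next
          case 3 then show ?thesis using True f[of j] by (simp add: C2_def)
        next
          case 2 then have "A i j = 0" using True f[of i] pair_m1[OF a, of i j] r by (simp add: cartan_A_aff_def)
          then show ?thesis using 2 True r by (auto simp add: C2_def)
        next
          case 4 then show ?thesis using w' r by (simp add: C2_def)
        next
          case 5 then show ?thesis using w r by (simp add: C2_def)
        next
          case 6 then have "A i j = 0" using True pair_zero[OF a, of i j] r by (auto simp add: cartan_A_aff_def)
          then show ?thesis using 6 True by (auto simp add: C2_def)
        qed
      qed
    qed
    then show ?thesis by simp
  qed
qed

lemma aff2_unique:
  assumes A: "A \<in> admissible_set 2 (cartan_A_aff 2)"
  shows "A = D2"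
proof -
  have a: "admissible 2 (cartan_A_aff 2) A" and z: "\<And>i j. i \<notin> {1..2} \<or> j \<notin> {1..2} \<Longrightarrow> A i j = 0"
    using A admissible_set_def by auto
  have rr: "1 \<in> {1..2::nat}" "2 \<in> {1..2::nat}" by auto
  have "A 1 2 + A 2 1 = -2" using adm_sum[OF a rr] by (simp add: cartan_A_aff_def)
  then have e: "A 1 2 = -1" "A 2 1 = -1" using adm_off[OF a rr] adm_off[OF a rr(2,1)] by auto
  have d: "A 1 1 = 1" "A 2 2 = 1" using adm_diag[OF a] rr by auto
  show ?thesis
  proof (intro ext)
    fix i j
    show "A i j = D2 i j"
    proof (cases "i \<in> {1..2} \<and> j \<in> {1..2}")
      case False then show ?thesis using z by (auto simp: D2_def)
    next
      case True
      then have "i = 1 \<or> i = 2" "j = 1 \<or> j = 2" by auto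
      then show ?thesis using e d by (auto simp: D2_def)
    qed
  qed
qed

lemma card_A: "r \<ge> 1 \<Longrightarrow> card (admissible_set r (cartan_A r)) = (if r = 1 then 1 else 2)"
proof -
  assume r: "r \<ge> 1"
  have S: "admissible_set r (cartan_A r) = {B1 r, B2 r}" using A_unique[OF _ r] B1_adm B2_adm by blast
  show ?thesis
  proof (cases "r = 1")
    case True
    have "B1 r = B2 r" using True by (auto simp: B1_def B2_def intro!: ext)
    then show ?thesis using S True by simp
  next
    case False
    have "B1 r 1 2 \<noteq> B2 r 1 2" using False r by (simp add: B1_def B2_def)
    then have "B1 r \<noteq> B2 r" by metis
    then show ?thesis using S False by simp
  qed
qed

lemma card_aff: "r \<ge> 2 \<Longrightarrow> card (admissible_set r (cartan_A_aff r)) = (if r = 2 then 1 else 2)"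
proof -
  assume r: "r \<ge> 2"
  show ?thesis
  proof (cases "r = 2")
    case True
    have "admissible_set r (cartan_A_aff r) = {D2}" using True aff2_unique D2_adm by blast
    then show ?thesis using True by simp
  next
    case False
    then have r3: "r \<ge> 3" using r by simp
    have S: "admissible_set r (cartan_A_aff r) = {C1 r, C2 r}" using aff_unique[OF _ r3] C1_adm[OF r3] C2_adm[OF r3] by blast
    have "C1 r 1 2 \<noteq> C2 r 1 2" using r3 by (simp add: C1_def C2_def)
    then have "C1 r \<noteq> C2 r" by metis
    then show ?thesis using S False by simp
  qed
qed


lemma to_type:
  assumes b: "bij_betw p {..<r} {1..r}" and NM: "\<forall>a<r. \<forall>b<r. N (p a) (p b) = M (Suc a) (Suc b)"
  shows "is_type r M N"
proof -
  define \<tau> where "\<tau> = (\<lambda>x. p (x - 1))"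
  have b1: "bij_betw (\<lambda>x::nat. x - 1) {1..r} {..<r}"
  proof (rule bij_betw_byWitness[where f' = Suc])
    show "\<forall>a\<in>{1..r}. Suc (a - 1) = a" by auto
    show "\<forall>a'\<in>{..<r}. Suc a' - 1 = a'" by auto
    show "(\<lambda>x. x - 1) ` {1..r} \<subseteq> {..<r}" by auto
    show "Suc ` {..<r} \<subseteq> {1..r}" by auto
  qed
  have bt: "bij_betw \<tau> {1..r} {1..r}" unfolding \<tau>_def
    using bij_betw_trans[OF b1 b] by (simp add: comp_def)
  have MN: "\<forall>i\<in>{1..r}. \<forall>j\<in>{1..r}. M i j = N (\<tau> i) (\<tau> j)"
  proof (intro ballI)
    fix i j :: nat assume "i \<in> {1..r}" "j \<in> {1..r}"
    then show "M i j = N (\<tau> i) (\<tau> j)" using NM[rule_format, of "i-1" "j-1"] \<tau>_def by auto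
  qed
  show ?thesis using type_sym[OF bt MN] is_type_def by blast
qed

lemma struct_type:
  assumes p: "bij_betw p {..<r} {1..r}"
    and ch: "\<forall>a<r. \<forall>b<r. R (p a) (p b) \<longleftrightarrow> (b = Suc a \<or> (cyc \<and> a = r - 1 \<and> b = 0))"
    and c2: "cyc \<longrightarrow> r \<ge> 2"
    and Nd: "\<And>i. i \<in> {1..r} \<Longrightarrow> N i i = 2"
    and Nv: "\<And>i j. i \<in> {1..r} \<Longrightarrow> j \<in> {1..r} \<Longrightarrow> i \<noteq> j \<Longrightarrow>
               N i j = - (if R i j then 1 else 0) - (if R j i then 1 else 0)"
  shows "is_type r (cartan_A r) N \<or> (r \<ge> 2 \<and> is_type r (cartan_A_aff r) N)"
proof -
  have pr: "\<And>a. a < r \<Longrightarrow> p a \<in> {1..r}" using p bij_betwE by blast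
  have pi: "\<And>a b. a < r \<Longrightarrow> b < r \<Longrightarrow> p a = p b \<Longrightarrow> a = b" using p unfolding bij_betw_def
    by (auto dest: inj_onD)
  have NP: "\<And>a b. a < r \<Longrightarrow> b < r \<Longrightarrow> N (p a) (p b) = (if a = b then 2 else
       - (if b = Suc a \<or> (cyc \<and> a = r - 1 \<and> b = 0) then 1 else 0)
       - (if a = Suc b \<or> (cyc \<and> b = r - 1 \<and> a = 0) then 1 else 0))"
  proof -
    fix a b assume a: "a < r" and b: "b < r"
    show "?thesis a b"
    proof (cases "a = b")
      case True then show ?thesis using Nd pr a by simp
    next
      case False
      then have "p a \<noteq> p b" using pi a b by blast
      then show ?thesis using Nv[OF pr[OF a] pr[OF b]] ch a b False by simp
    qed
  qed
  show ?thesis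
  proof (cases cyc)
    case False
    have "\<forall>a<r. \<forall>b<r. N (p a) (p b) = cartan_A r (Suc a) (Suc b)"
      using NP False by (auto simp: cartan_A_def)
    then show ?thesis using to_type[OF p] by blast
  next
    case True
    then have r2: "r \<ge> 2" using c2 by simp
    have "\<forall>a<r. \<forall>b<r. N (p a) (p b) = cartan_A_aff r (Suc a) (Suc b)"
    proof (intro allI impI)
      fix a b assume a: "a < r" and b: "b < r"
      show "N (p a) (p b) = cartan_A_aff r (Suc a) (Suc b)"
      proof (cases "r = 2")
        case True
        then show ?thesis using NP[OF a b] \<open>cyc\<close> a b by (auto simp: cartan_A_aff_def)
      next
        case False
        then show ?thesis using NP[OF a b] \<open>cyc\<close> a b r2 by (auto simp: cartan_A_aff_def)
      qed
    qed
    then show ?thesis using to_type[OF p] r2 by blast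
  qed
qed


lemma adm_imp_type:
  assumes r: "r \<ge> 1" and g: "gcm r N" and ind: "indecomposable r N" and a: "admissible r N A"
  shows "is_type r (cartan_A r) N \<or> (r \<ge> 2 \<and> is_type r (cartan_A_aff r) N)"
proof -
  define E where "E = (\<lambda>i j. i \<in> {1..r} \<and> j \<in> {1..r} \<and> i \<noteq> j \<and> A i j = -1)"
  have Er: "\<And>i j. E i j \<Longrightarrow> i \<in> {1..r} \<and> j \<in> {1..r}" using E_def by simp
  have Ef: "j = k" if e1: "E i j" and e2: "E i k" for i j k
  proof (rule ccontr)
    assume "j \<noteq> k"
    then show False using adm_row[OF a, of i j k] e1 e2 E_def by simp
  qed
  have Ei: "i = j" if e1: "E i k" and e2: "E j k" for i j k
  proof (rule ccontr)
    assume "i \<noteq> j"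
    then show False using adm_col[OF a, of i k j] e1 e2 E_def by simp
  qed
  have Eirr: "\<And>i. \<not> E i i" using E_def by simp
  have Nd: "\<And>i. i \<in> {1..r} \<Longrightarrow> N i i = 2" using g gcm_def by blast
  have Nv: "\<And>i j. i \<in> {1..r} \<Longrightarrow> j \<in> {1..r} \<Longrightarrow> i \<noteq> j \<Longrightarrow>
               N i j = - (if E i j then 1 else 0) - (if E j i then 1 else 0)"
  proof -
    fix i j assume i: "i \<in> {1..r}" and j: "j \<in> {1..r}" and ij: "i \<noteq> j"
    have "A j i + A i j = N i j" using adm_sum[OF a j i] .
    moreover have "A i j = 0 \<or> A i j = -1" "A j i = 0 \<or> A j i = -1" using adm_off[OF a] i j ij by auto
    ultimately show "N i j = - (if E i j then 1 else 0) - (if E j i then 1 else 0)"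
      using E_def i j ij by auto
  qed
  have conn: "P = {1..r}" if P0: "P \<subseteq> {1..r}" "P \<noteq> {}" "\<forall>i\<in>P. \<forall>j. E i j \<or> E j i \<longrightarrow> j \<in> P" for P
  proof (rule ccontr)
    assume "P \<noteq> {1..r}"
    note P = P0 this
    define J where "J = {1..r} - P"
    have "J \<noteq> {}" using P(1,4) J_def by blast
    moreover have "P \<inter> J = {}" "P \<union> J = {1..r}" using P(1) J_def by blast+
    moreover have "\<forall>i\<in>P. \<forall>j\<in>J. N i j = 0"
    proof (intro ballI)
      fix i j assume i: "i \<in> P" and j: "j \<in> J"
      have "j \<notin> P" using j J_def by blast
      then have "i \<noteq> j" "i \<in> {1..r}" "j \<in> {1..r}" "\<not> E i j" "\<not> E j i"
        using i j P(1) P(3) J_def by blast+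
      then show "N i j = 0" using Nv by simp
    qed
    ultimately show False using ind P(2) unfolding indecomposable_def by blast
  qed
  show ?thesis
  proof (cases "\<forall>i\<in>{1..r}. \<exists>j. E i j")
    case True
    have s: "(1::nat) \<in> {1..r}" using r by simp
    obtain p where p: "bij_betw p {..<r} {1..r}"
      and ch: "\<forall>a<r. \<forall>b<r. E (p a) (p b) \<longleftrightarrow> (b = Suc a \<or> ((\<exists>j. E j 1) \<and> a = r - 1 \<and> b = 0))"
      and c2: "(\<exists>j. E j 1) \<longrightarrow> r \<ge> 2"
    proof -
      have "\<exists>p. bij_betw p {..<r} {1..r} \<and>
         (\<forall>a<r. \<forall>b<r. E (p a) (p b) \<longleftrightarrow> (b = Suc a \<or> ((\<exists>j. E j 1) \<and> a = r - 1 \<and> b = 0))) \<and>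
         ((\<exists>j. E j 1) \<longrightarrow> r \<ge> 2)"
        apply (rule struct_lemma[of E r 1])
        subgoal using Er by blast
        subgoal using Ef by blast
        subgoal using Ei by blast
        subgoal using Eirr by blast
        subgoal for P using conn[of P] by blast
        subgoal using s by blast
        subgoal using True by blast
        done
      then show ?thesis using that by blast
    qed
    show ?thesis by (rule struct_type[OF p ch c2 Nd Nv]) auto
  next
    case False
    then obtain s where s: "s \<in> {1..r}" "\<forall>j. \<not> E s j" by blast
    define R where "R = (\<lambda>i j. E j i)"
    have Rr: "\<And>i j. R i j \<Longrightarrow> i \<in> {1..r} \<and> j \<in> {1..r}" using Er R_def by blast
    have Rf: "\<And>i j k. R i j \<Longrightarrow> R i k \<Longrightarrow> j = k" using Ei R_def by blast
    have Ri: "\<And>i j k. R i k \<Longrightarrow> R j k \<Longrightarrow> i = j" using Ef R_def by blast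
    have Rirr: "\<And>i. \<not> R i i" using Eirr R_def by blast
    have Rconn: "\<And>P. P \<subseteq> {1..r} \<Longrightarrow> P \<noteq> {} \<Longrightarrow> (\<forall>i\<in>P. \<forall>j. R i j \<or> R j i \<longrightarrow> j \<in> P) \<Longrightarrow> P = {1..r}"
      using conn R_def by blast
    have cs: "(\<forall>j. \<not> R j s) \<or> (\<forall>i\<in>{1..r}. \<exists>j. R i j)" using s R_def by blast
    obtain p where p: "bij_betw p {..<r} {1..r}"
      and ch: "\<forall>a<r. \<forall>b<r. R (p a) (p b) \<longleftrightarrow> (b = Suc a \<or> ((\<exists>j. R j s) \<and> a = r - 1 \<and> b = 0))"
      and c2: "(\<exists>j. R j s) \<longrightarrow> r \<ge> 2"
    proof -
      have "\<exists>p. bij_betw p {..<r} {1..r} \<and>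
         (\<forall>a<r. \<forall>b<r. R (p a) (p b) \<longleftrightarrow> (b = Suc a \<or> ((\<exists>j. R j s) \<and> a = r - 1 \<and> b = 0))) \<and>
         ((\<exists>j. R j s) \<longrightarrow> r \<ge> 2)"
        apply (rule struct_lemma[of R r s])
        subgoal using Rr by blast
        subgoal using Rf by blast
        subgoal using Ri by blast
        subgoal using Rirr by blast
        subgoal for P using Rconn[of P] by blast
        subgoal using s by blast
        subgoal using cs by blast
        done
      then show ?thesis using that by blast
    qed
    have NvR: "\<And>i j. i \<in> {1..r} \<Longrightarrow> j \<in> {1..r} \<Longrightarrow> i \<noteq> j \<Longrightarrow>
               N i j = - (if R i j then 1 else 0) - (if R j i then 1 else 0)"
      using Nv R_def by simp
    show ?thesis by (rule struct_type[OF p ch c2 Nd NvR])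
  qed
qed

theorem lemma3p8:
  fixes r :: nat and N :: "nat \<Rightarrow> nat \<Rightarrow> int"
  assumes "r \<ge> 1" and "gcm r N" and "indecomposable r N"
  shows "((\<exists>A. admissible r N A) \<longleftrightarrow>
            (is_type r (cartan_A r) N \<or> (r \<ge> 2 \<and> is_type r (cartan_A_aff r) N)))
       \<and> ((r = 1 \<and> is_type r (cartan_A r) N) \<or> (r = 2 \<and> is_type r (cartan_A_aff r) N)
            \<longrightarrow> card (admissible_set r N) = 1)
       \<and> ((r \<ge> 2 \<and> is_type r (cartan_A r) N) \<or> (r \<ge> 3 \<and> is_type r (cartan_A_aff r) N)
            \<longrightarrow> card (admissible_set r N) = 2)"
proof -
  have cA: "is_type r (cartan_A r) N \<Longrightarrow> card (admissible_set r N) = (if r = 1 then 1 else 2)"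
    using card_transfer card_A assms(1) by metis
  have cF: "r \<ge> 2 \<Longrightarrow> is_type r (cartan_A_aff r) N \<Longrightarrow> card (admissible_set r N) = (if r = 2 then 1 else 2)"
    using card_transfer card_aff by metis
  have ne: "card (admissible_set r N) \<noteq> 0 \<Longrightarrow> \<exists>A. admissible r N A"
    using admissible_set_def by (metis (no_types, lifting) card.empty empty_Collect_eq)
  show ?thesis
  proof (intro conjI impI)
    show "(\<exists>A. admissible r N A) \<longleftrightarrow> (is_type r (cartan_A r) N \<or> (r \<ge> 2 \<and> is_type r (cartan_A_aff r) N))"
    proof
      assume "\<exists>A. admissible r N A"
      then show "is_type r (cartan_A r) N \<or> (r \<ge> 2 \<and> is_type r (cartan_A_aff r) N)"
        using adm_imp_type assms by blast
    next
      assume "is_type r (cartan_A r) N \<or> (r \<ge> 2 \<and> is_type r (cartan_A_aff r) N)"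
      then show "\<exists>A. admissible r N A"
        using cA cF ne by (metis one_neq_zero zero_neq_numeral)
    qed
  next
    assume "(r = 1 \<and> is_type r (cartan_A r) N) \<or> (r = 2 \<and> is_type r (cartan_A_aff r) N)"
    then show "card (admissible_set r N) = 1" using cA cF by auto
  next
    assume "(r \<ge> 2 \<and> is_type r (cartan_A r) N) \<or> (r \<ge> 3 \<and> is_type r (cartan_A_aff r) N)"
    then show "card (admissible_set r N) = 2" using cA cF by auto
  qed
qed

end
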